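(* Let $(S,d)$ be a metric space with at least two points. If $f\in\operatorname{ext}_*(B^S_{\mathrm{BL}})$, then $\inf_{x\in S}f(x)=-\sup_{x\in S}f(x)$. In particular, if $S$ is compact, then $f$ attains both values $\|f\|_\infty$ and $-\|f\|_\infty$.
   Context: $\mathrm{BL}(S)$ is the space of bounded real-valued Lipschitz functions on $S$, $|f|_L=\sup_{x\neq y}|f(x)-f(y)|/d(x,y)$, $\|f\|_{\mathrm{BL}}=\|f\|_\infty+|f|_L$, $B^S_{\mathrm{BL}}=\{f\in\mathrm{BL}(S):\|f\|_{\mathrm{BL}}\le1\}$, $\operatorname{ext}$ denotes extreme points, and $\operatorname{ext}_*(B^S_{\mathrm{BL}})=\operatorname{ext}(B^S_{\mathrm{BL}})\setminus\{f\in B^S_{\mathrm{BL}}:|f|=\mathbf{1}\}$. *)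

theory Defs
  imports "HOL-Analysis.Analysis"
begin

definition sup_norm :: "('a \<Rightarrow> real) \<Rightarrow> real" where
  "sup_norm f = (SUP x. \<bar>f x\<bar>)"

definition lip_norm :: "('a::metric_space \<Rightarrow> real) \<Rightarrow> real" where
  "lip_norm f = (SUP p \<in> {(x,y). x \<noteq> y}. \<bar>f (fst p) - f (snd p)\<bar> / dist (fst p) (snd p))"

definition BL :: "('a::metric_space \<Rightarrow> real) set" where
  "BL = {f. bounded (range f) \<and> (\<exists>L. \<forall>x y. \<bar>f x - f y\<bar> \<le> L * dist x y)}"

definition bl_norm :: "('a::metric_space \<Rightarrow> real) \<Rightarrow> real" where
  "bl_norm f = sup_norm f + lip_norm f"

definition BL_ball :: "('a::metric_space \<Rightarrow> real) set" where
  "BL_ball = {f \<in> BL. bl_norm f \<le> 1}"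

definition ext :: "('a \<Rightarrow> real) set \<Rightarrow> ('a \<Rightarrow> real) set" where
  "ext B = {f \<in> B. \<forall>g\<in>B. \<forall>h\<in>B. \<forall>t::real. 0 < t \<and> t < 1 \<and>
              f = (\<lambda>x. t * g x + (1 - t) * h x) \<longrightarrow> g = h}"

definition ext_star :: "('a::metric_space \<Rightarrow> real) set" where
  "ext_star = ext BL_ball - {f \<in> BL_ball. (\<lambda>x. \<bar>f x\<bar>) = (\<lambda>_. 1)}"

end

theory Submission
  imports Defs
begin

lemma sup_norm_le:
  assumes "\<And>x. \<bar>g x\<bar> \<le> A"
  shows "sup_norm g \<le> A"
  unfolding sup_norm_def by (rule cSUP_least) (auto intro: assms)

lemma lip_norm_le:
  fixes g :: "'a::metric_space \<Rightarrow> real"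
  assumes two: "\<exists>x y::'a. x \<noteq> y" and "\<And>x y. \<bar>g x - g y\<bar> \<le> B * dist x y"
  shows "lip_norm g \<le> B"
  unfolding lip_norm_def
proof (rule cSUP_least)
  show "{(x, y). x \<noteq> (y::'a)} \<noteq> {}" using two by auto
next
  fix p :: "'a \<times> 'a" assume "p \<in> {(x, y). x \<noteq> y}"
  then have "dist (fst p) (snd p) > 0" by auto
  then show "\<bar>g (fst p) - g (snd p)\<bar> / dist (fst p) (snd p) \<le> B"
    using assms(2)[of "fst p" "snd p"] by (simp add: divide_le_eq)
qed

lemma BL_facts:
  fixes f :: "'a::metric_space \<Rightarrow> real"
  assumes "f \<in> BL"
  shows "\<And>x. \<bar>f x\<bar> \<le> sup_norm f"
    and "\<And>x y. \<bar>f x - f y\<bar> \<le> lip_norm f * dist x y"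
    and "bdd_above (range f)" and "bdd_below (range f)"
proof -
  from assms obtain L where bd: "bounded (range f)" and L: "\<forall>x y. \<bar>f x - f y\<bar> \<le> L * dist x y"
    unfolding BL_def by auto
  from bd obtain K where K: "\<And>x. \<bar>f x\<bar> \<le> K" unfolding bounded_iff by auto
  show "bdd_above (range f)" using K by (auto intro!: bdd_aboveI[of _ K] simp: abs_le_iff)
  have K': "-K \<le> f x" for x using K[of x] by linarith
  show "bdd_below (range f)" using K' by (auto intro!: bdd_belowI[of _ "-K"])
  fix x
  show "\<bar>f x\<bar> \<le> sup_norm f" unfolding sup_norm_def
    by (rule cSUP_upper) (auto intro!: bdd_aboveI[of _ K] simp: K)
next
  from assms obtain L where L: "\<forall>x y. \<bar>f x - f y\<bar> \<le> L * dist x y"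
    unfolding BL_def by auto
  fix x y :: 'a
  show "\<bar>f x - f y\<bar> \<le> lip_norm f * dist x y"
  proof (cases "x = y")
    case True then show ?thesis by simp
  next
    case False
    have bdd: "bdd_above ((\<lambda>p. \<bar>f (fst p) - f (snd p)\<bar> / dist (fst p) (snd p)) ` {(x,y). x \<noteq> y})"
    proof (rule bdd_aboveI[of _ L])
      fix z assume "z \<in> (\<lambda>p. \<bar>f (fst p) - f (snd p)\<bar> / dist (fst p) (snd p)) ` {(x,y). x \<noteq> y}"
      then obtain a b where "a \<noteq> b" "z = \<bar>f a - f b\<bar> / dist a b" by auto
      then show "z \<le> L" using L[rule_format, of a b] by (simp add: divide_le_eq)
    qed
    have "\<bar>f x - f y\<bar> / dist x y \<le> lip_norm f"
      unfolding lip_norm_def using cSUP_upper[OF _ bdd, of "(x,y)"] False by simp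
    then show ?thesis using False by (simp add: divide_le_eq)
  qed
qed

lemma key:
  fixes f :: "'a::metric_space \<Rightarrow> real"
  assumes two: "\<exists>x y::'a. x \<noteq> y"
    and fe: "f \<in> ext BL_ball"
    and s: "\<bar>s\<bar> = 1" and l: "0 < l" "l < 1"
    and bnd: "\<And>x. \<bar>f x - s * l\<bar> \<le> sup_norm f - l"
  shows "f = (\<lambda>_. s)"
proof -
  have fB: "f \<in> BL" and fn: "sup_norm f + lip_norm f \<le> 1"
    using fe unfolding ext_def BL_ball_def bl_norm_def by auto
  note F = BL_facts[OF fB]
  define u where "u = (\<lambda>x. (f x - s * l) / (1 - l))"
  have ub: "\<bar>u x\<bar> \<le> (sup_norm f - l) / (1 - l)" for x
    using bnd[of x] l unfolding u_def by (simp add: divide_right_mono)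
  have ul: "\<bar>u x - u y\<bar> \<le> (lip_norm f / (1 - l)) * dist x y" for x y
  proof -
    have "u x - u y = (f x - f y) / (1 - l)" unfolding u_def by (simp add: diff_divide_distrib[symmetric])
    then have "\<bar>u x - u y\<bar> = \<bar>f x - f y\<bar> / (1 - l)" using l by simp
    also have "\<dots> \<le> lip_norm f * dist x y / (1 - l)"
      using F(2)[of x y] l by (simp add: divide_right_mono)
    finally show ?thesis by simp
  qed
  have "bounded (range u)" using ub by (auto simp: bounded_iff)
  then have uBL: "u \<in> BL" unfolding BL_def
    using ul by (auto intro!: exI[of _ "lip_norm f / (1 - l)"])
  have "bl_norm u \<le> (sup_norm f - l) / (1 - l) + lip_norm f / (1 - l)"
    unfolding bl_norm_def using sup_norm_le[of u, OF ub] lip_norm_le[OF two ul] by linarith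
  also have "\<dots> = (sup_norm f - l + lip_norm f) / (1 - l)" by (rule add_divide_distrib[symmetric])
  also have "\<dots> \<le> 1" using fn l by (intro mult_imp_div_pos_le) auto
  finally have uball: "u \<in> BL_ball" unfolding BL_ball_def using uBL by simp
  have cBL: "(\<lambda>_::'a. s) \<in> BL" unfolding BL_def by (auto intro!: exI[of _ 0])
  have "bl_norm (\<lambda>_::'a. s) \<le> 1 + 0" unfolding bl_norm_def
    using sup_norm_le[of "\<lambda>_::'a. s" 1] lip_norm_le[OF two, of "\<lambda>_. s" 0] s by simp
  then have cball: "(\<lambda>_::'a. s) \<in> BL_ball" unfolding BL_ball_def using cBL by simp
  have eq: "f = (\<lambda>x. (1 - l) * u x + (1 - (1 - l)) * s)"
    unfolding u_def using l by (auto simp: field_simps)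
  have E: "\<forall>g\<in>BL_ball. \<forall>h\<in>BL_ball. \<forall>t::real. 0 < t \<and> t < 1 \<and>
              f = (\<lambda>x. t * g x + (1 - t) * h x) \<longrightarrow> g = h"
    using fe unfolding ext_def by simp
  have "u = (\<lambda>_. s)"
    using E[rule_format, OF uball cball, of "1 - l"] l eq by simp
  then have ux: "u x = s" for x by simp
  have "f x = s" for x
  proof -
    have "(f x - s * l) = s * (1 - l)" using ux[of x] l unfolding u_def by (simp add: divide_eq_eq)
    then show ?thesis by (simp add: algebra_simps)
  qed
  then show ?thesis by auto
qed

theorem lemma3p4:
  fixes f :: "'a::metric_space \<Rightarrow> real"
  assumes two_points: "\<exists>x y::'a. x \<noteq> y"
    and f_ext: "f \<in> ext_star"
  shows "(INF x. f x) = - (SUP x. f x) \<and>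
         (compact (UNIV :: 'a set) \<longrightarrow>
           (\<exists>x. f x = sup_norm f) \<and> (\<exists>y. f y = - sup_norm f))"
proof -
  have fe: "f \<in> ext BL_ball" and fb: "f \<in> BL_ball" and n1: "(\<lambda>x. \<bar>f x\<bar>) \<noteq> (\<lambda>_. 1)"
    using f_ext unfolding ext_star_def ext_def by auto
  have fB: "f \<in> BL" using fb unfolding BL_ball_def by auto
  note F = BL_facts[OF fB]
  define M where "M = (SUP x. f x)"
  define m where "m = (INF x. f x)"
  have Mx: "f x \<le> M" for x unfolding M_def using F(3) by (simp add: cSUP_upper)
  have mx: "m \<le> f x" for x unfolding m_def using F(4) by (simp add: cINF_lower)
  have SM: "M \<le> sup_norm f" unfolding M_def
    by (rule cSUP_least) (use F(1) in \<open>auto simp: abs_le_iff\<close>)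
  have Sm: "- m \<le> sup_norm f"
  proof -
    have K': "- sup_norm f \<le> f x" for x using F(1)[of x] by linarith
    have "m \<ge> - sup_norm f" unfolding m_def
      by (rule cINF_greatest) (use K' in auto)
    then show ?thesis by simp
  qed
  have main: "m = - M"
  proof (rule ccontr)
    assume ne: "m \<noteq> - M"
    show False
    proof (cases "M + m > 0")
      case True
      define l where "l = min ((M + m) / 2) (1/2)"
      have l: "0 < l" "l < 1" "2 * l \<le> M + m" using True unfolding l_def by (auto simp: min_def)
      have "f = (\<lambda>_. 1)"
      proof (rule key[OF two_points fe _ l(1,2)])
        fix x show "\<bar>f x - 1 * l\<bar> \<le> sup_norm f - l"
          using Mx[of x] mx[of x] SM l by (auto simp: abs_le_iff)
      qed simp
      then show False using n1 by auto
    next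
      case False
      then have neg: "M + m < 0" using ne by auto
      define l where "l = min (- (M + m) / 2) (1/2)"
      have l: "0 < l" "l < 1" "2 * l \<le> - (M + m)" using neg unfolding l_def by (auto simp: min_def)
      have "f = (\<lambda>_. - 1)"
      proof (rule key[OF two_points fe _ l(1,2)])
        fix x show "\<bar>f x - (-1) * l\<bar> \<le> sup_norm f - l"
          using Mx[of x] mx[of x] Sm l by (auto simp: abs_le_iff)
      qed simp
      then show False using n1 by auto
    qed
  qed
  moreover have "compact (UNIV :: 'a set) \<longrightarrow>
           (\<exists>x. f x = sup_norm f) \<and> (\<exists>y. f y = - sup_norm f)"
  proof
    assume c: "compact (UNIV :: 'a set)"
    have L0: "0 \<le> lip_norm f"
    proof -
      obtain x y :: 'a where "x \<noteq> y" using two_points by auto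
      then have "dist x y > 0" by simp
      moreover have "0 \<le> lip_norm f * dist x y" using F(2)[of x y] abs_ge_zero order_trans by blast
      ultimately show ?thesis by (simp add: zero_le_mult_iff)
    qed
    have "lipschitz_on (lip_norm f) UNIV f"
      unfolding lipschitz_on_def using F(2) L0 by (simp add: dist_real_def)
    then have cont: "continuous_on UNIV f" by (rule lipschitz_on_continuous_on)
    obtain a where a: "\<And>t. f t \<le> f a"
      using continuous_attains_sup[OF c _ cont] by auto
    obtain b where b: "\<And>t. f b \<le> f t"
      using continuous_attains_inf[OF c _ cont] by auto
    have Ma: "M = f a" using Mx[of a] a unfolding M_def by (intro antisym cSUP_least) auto
    have mb: "m = f b" using mx[of b] b unfolding m_def by (intro antisym cINF_greatest) auto
    have "sup_norm f \<le> M"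
    proof (rule sup_norm_le)
      fix x show "\<bar>f x\<bar> \<le> M" using main Mx[of x] mx[of x] by linarith
    qed
    then have SN: "sup_norm f = M" using SM by linarith
    have "f a = sup_norm f" using SN Ma by simp
    moreover have "f b = - sup_norm f" using SN mb main by simp
    ultimately show "(\<exists>x. f x = sup_norm f) \<and> (\<exists>y. f y = - sup_norm f)"
      by blast
  qed
  ultimately show ?thesis unfolding M_def m_def by (rule conjI)
qed

end
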